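(* Let $k\colon K\to T1$ be an $n$-globular operad equipped with a contraction and a system of compositions. Then $k$ has a section $\hat k\colon T1\to K$ in $\mathbf{GSet}_n$ (i.e. $k\circ\hat k=\mathrm{id}_{T1}$); in particular $k_m\colon K_m\to(T1)_m$ is surjective for every $0\le m\le n$.
   Context: Fix $n\in\mathbb{N}$. An $n$-globular set $X$ consists of sets $X_0,\dots,X_n$ and functions $s,t\colon X_m\to X_{m-1}$ ($1\le m\le n$) with $s\circ s=s\circ t$ and $t\circ s=t\circ t$; maps commute with $s,t$; $\mathbf{GSet}_n$ is the resulting category. Two $m$-cells are parallel if they have the same source and target. $T$ denotes the free strict $n$-category monad on $\mathbf{GSet}_n$, with unit $\eta^T$ and multiplication $\mu^T$. $1$ denotes the terminal $n$-globular set and $!$ any map to $1$; $T1$ is the free strict $n$-category on $1$; $\mathrm{id}_\alpha$ is the identity cell on $\alpha$. An $n$-globular collection is a map $k\colon K\to T1$ in $\mathbf{GSet}_n$; a map of collections is a map over $T1$. The tensor $K\otimes K'$ of collections $k\colon K\to T1$, $k'\colon K'\to T1$ is the pullback of $k$ along $T!\colon TK'\to T1$, regarded as a collection via $K\otimes K'\to TK'\xrightarrow{Tk'}T^21\xrightarrow{\mu^T_1}T1$; the unit is $\eta^T_1\colon1\to T1$. An $n$-globular operad is a monoid $(K,\eta^K,\mu^K)$ in this monoidal category of collections. Contractions: for a collection $k\colon K\to T1$ and $x\in(T1)_m$ put $K(x)=\{a\in K_m: k(a)=x\}$. For $1\le m\le n$ and $\pi\in(T1)_m$ let $C_K(\pi)=K(s\pi)\times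 K(t\pi)$ if $m=1$, and $C_K(\pi)=\{(a,b)\in K(s\pi)\times K(t\pi): s(a)=s(b),\ t(a)=t(b)\}$ if $m>1$. A contraction $\gamma$ on $K$ consists of, for each $1\le m\le n$ and each $\alpha\in(T1)_{m-1}$, a function $\gamma_{\mathrm{id}_\alpha}\colon C_K(\mathrm{id}_\alpha)\to K(\mathrm{id}_\alpha)$ with $s\gamma_{\mathrm{id}_\alpha}(a,b)=a$ and $t\gamma_{\mathrm{id}_\alpha}(a,b)=b$, such that moreover (tameness) any two parallel $n$-cells $a,b$ of $K$ with $k(a)=k(b)$ are equal. Systems of compositions: for $0\le m\le n$ let $\eta_m\in(T1)_m$ be the image under $\eta^T_1$ of the unique $m$-cell of $1$; put $\beta^m_m=\eta_m$ and $\beta^m_p=\eta_m\circ^m_p\eta_m$ for $0\le p<m$. Let $S\subseteq T1$ be the sub-$n$-globular set with $S_m=\{\beta^m_p:0\le p\le m\}$, a collection via the inclusion, with $\eta^S\colon1\to S$ picking out each $\beta^m_m$. A system of compositions on an operad $K$ is a map of collections $\sigma\colon S\to K$ with $\sigma\circ\eta^S=\eta^K$. *)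

theory Defs
  imports Main "HOL-Library.FuncSet"
begin

section \<open>n-globular sets (all cells of one carrier type; cells indexed by dimension)\<close>

record 'a gset =
  gcells :: "nat \<Rightarrow> 'a set"
  gsrc   :: "nat \<Rightarrow> 'a \<Rightarrow> 'a"   \<comment> \<open>gsrc X m : X_m -> X_(m-1)\<close>
  gtgt   :: "nat \<Rightarrow> 'a \<Rightarrow> 'a"

definition is_gset :: "nat \<Rightarrow> 'a gset \<Rightarrow> bool" where
  "is_gset n X \<longleftrightarrow>
     (\<forall>m>n. gcells X m = {}) \<and>
     (\<forall>m. 1 \<le> m \<and> m \<le> n \<longrightarrow> (\<forall>x\<in>gcells X m.
          gsrc X m x \<in> gcells X (m-1) \<and> gtgt X m x \<in> gcells X (m-1))) \<and>
     (\<forall>m. 2 \<le> m \<and> m \<le> n \<longrightarrow> (\<forall>x\<in>gcells X m.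
          gsrc X (m-1) (gsrc X m x) = gsrc X (m-1) (gtgt X m x) \<and>
          gtgt X (m-1) (gsrc X m x) = gtgt X (m-1) (gtgt X m x)))"

text \<open>Maps of n-globular sets; they are only ever compared on cells.\<close>
definition gmap :: "nat \<Rightarrow> 'a gset \<Rightarrow> 'b gset \<Rightarrow> (nat \<Rightarrow> 'a \<Rightarrow> 'b) \<Rightarrow> bool" where
  "gmap n X Y f \<longleftrightarrow>
     (\<forall>m\<le>n. \<forall>x\<in>gcells X m. f m x \<in> gcells Y m) \<and>
     (\<forall>m. 1 \<le> m \<and> m \<le> n \<longrightarrow> (\<forall>x\<in>gcells X m.
          f (m-1) (gsrc X m x) = gsrc Y m (f m x) \<and>
          f (m-1) (gtgt X m x) = gtgt Y m (f m x)))"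

definition one :: "nat \<Rightarrow> unit gset" where
  "one n = \<lparr>gcells = (\<lambda>m. if m \<le> n then {()} else {}), gsrc = (\<lambda>_ _. ()), gtgt = (\<lambda>_ _. ())\<rparr>"

section \<open>Pasting diagrams (trees) and their globular sets of positions\<close>

datatype ptree = PT "ptree list"

fun kids :: "ptree \<Rightarrow> ptree list" where
  "kids (PT ts) = ts"

text \<open>hle m t: t has height at most m, i.e. t is an m-cell of T1.\<close>
fun hle :: "nat \<Rightarrow> ptree \<Rightarrow> bool" where
  "hle 0 (PT ts) = (ts = [])"
| "hle (Suc m) (PT ts) = (\<forall>t\<in>set ts. hle m t)"

text \<open>Truncation = source = target in T1.\<close>
fun trunc :: "nat \<Rightarrow> ptree \<Rightarrow> ptree" where
  "trunc 0 t = PT []"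
| "trunc (Suc k) (PT ts) = PT (map (trunc k) ts)"

fun subt :: "ptree \<Rightarrow> nat list \<Rightarrow> ptree" where
  "subt t [] = t"
| "subt (PT ts) (i # p) = subt (ts ! i) p"

text \<open>k-dimensional cells of the globular set of a pasting diagram, as lists of
  length k+1: for PT ts, the 0-cells are [j] (j \<le> length ts), and the (k+1)-cells
  are i # c with c a k-cell of the i-th subtree.\<close>
fun pos :: "ptree \<Rightarrow> nat \<Rightarrow> nat list set" where
  "pos (PT ts) 0 = {[j] | j. j \<le> length ts}"
| "pos (PT ts) (Suc k) = {i # c | i c. i < length ts \<and> c \<in> pos (ts ! i) k}"

definition allpos :: "ptree \<Rightarrow> nat list set" where
  "allpos t = (\<Union>k. pos t k)"

fun psrc :: "nat list \<Rightarrow> nat list" where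
  "psrc [] = []"
| "psrc [i] = []"
| "psrc [i, j] = [i]"
| "psrc (i # j # k # c) = i # psrc (j # k # c)"

fun ptgt :: "nat list \<Rightarrow> nat list" where
  "ptgt [] = []"
| "ptgt [i] = []"
| "ptgt [i, j] = [Suc i]"
| "ptgt (i # j # k # c) = i # ptgt (j # k # c)"

section \<open>The free strict n-category monad T\<close>

type_synonym 'a tcell = "ptree \<times> (nat list \<Rightarrow> 'a)"
type_synonym t1cell = "unit tcell"

text \<open>A labelling of a pasting diagram by X, i.e. a map of globular sets from it to X.\<close>
definition labels :: "'a gset \<Rightarrow> ptree \<Rightarrow> (nat list \<Rightarrow> 'a) \<Rightarrow> bool" where
  "labels X t f \<longleftrightarrow>
     (\<forall>k. \<forall>c\<in>pos t k. f c \<in> gcells X k) \<and>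
     (\<forall>k. \<forall>c\<in>pos t (Suc k). gsrc X (Suc k) (f c) = f (psrc c) \<and> gtgt X (Suc k) (f c) = f (ptgt c)) \<and>
     f \<in> extensional (allpos t)"

text \<open>T X: m-cells are pasting diagrams of dimension \<le> m labelled in X
  (cells of dimension < m among them are identities).\<close>
definition Tg :: "nat \<Rightarrow> 'a gset \<Rightarrow> 'a tcell gset" where
  "Tg n X = \<lparr>gcells = (\<lambda>m. if m \<le> n then {(t, f). hle m t \<and> labels X t f} else {}),
     gsrc = (\<lambda>m (t, f). (trunc (m-1) t, restrict f (allpos (trunc (m-1) t)))),
     gtgt = (\<lambda>m (t, f). (trunc (m-1) t,
        restrict (\<lambda>c. if length c = m then f (butlast c @ [length (kids (subt t (butlast c)))]) else f c)
                 (allpos (trunc (m-1) t))))\<rparr>"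

definition T1 :: "nat \<Rightarrow> t1cell gset" where
  "T1 n = Tg n (one n)"

definition Tmap :: "(nat \<Rightarrow> 'a \<Rightarrow> 'b) \<Rightarrow> nat \<Rightarrow> 'a tcell \<Rightarrow> 'b tcell" where
  "Tmap g m = (\<lambda>(t, f). (t, restrict (\<lambda>c. g (length c - 1) (f c)) (allpos t)))"

definition Tbang :: "nat \<Rightarrow> 'a tcell \<Rightarrow> t1cell" where
  "Tbang = Tmap (\<lambda>_ _. ())"

fun globe :: "nat \<Rightarrow> ptree" where
  "globe 0 = PT []"
| "globe (Suc m) = PT [globe m]"

fun isrc :: "'a gset \<Rightarrow> nat \<Rightarrow> nat \<Rightarrow> 'a \<Rightarrow> 'a" where
  "isrc X m 0 x = x"
| "isrc X m (Suc j) x = gsrc X (m - j) (isrc X m j x)"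

fun itgt :: "'a gset \<Rightarrow> nat \<Rightarrow> nat \<Rightarrow> 'a \<Rightarrow> 'a" where
  "itgt X m 0 x = x"
| "itgt X m (Suc j) x = gtgt X (m - j) (itgt X m j x)"

definition etaT :: "'a gset \<Rightarrow> nat \<Rightarrow> 'a \<Rightarrow> 'a tcell" where
  "etaT X m x = (globe m, restrict (\<lambda>c. if last c = 0 then isrc X m (m - (length c - 1)) x
                                          else itgt X m (m - (length c - 1)) x) (allpos (globe m)))"

text \<open>Composition \<circ>_p in the free strict n-category (diagrammatic order: first, then second).\<close>
fun tcomp :: "nat \<Rightarrow> ptree \<Rightarrow> ptree \<Rightarrow> ptree" where
  "tcomp 0 (PT us) (PT vs) = PT (us @ vs)"
| "tcomp (Suc p) (PT us) (PT vs) = PT (map2 (tcomp p) us vs)"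

fun lcomp :: "nat \<Rightarrow> ptree \<Rightarrow> ptree \<Rightarrow> (nat list \<Rightarrow> 'a) \<Rightarrow> (nat list \<Rightarrow> 'a) \<Rightarrow> nat list \<Rightarrow> 'a" where
  "lcomp p t u f g [] = undefined"
| "lcomp 0 (PT us) u f g [j] = (if j \<le> length us then f [j] else g [j - length us])"
| "lcomp 0 (PT us) u f g (i # j # c) =
     (if i < length us then f (i # j # c) else g ((i - length us) # j # c))"
| "lcomp (Suc p) t u f g [j] = f [j]"
| "lcomp (Suc p) (PT us) (PT vs) f g (i # j # c) =
     lcomp p (us ! i) (vs ! i) (\<lambda>c. f (i # c)) (\<lambda>c. g (i # c)) (j # c)"

definition tcompose :: "nat \<Rightarrow> 'a tcell \<Rightarrow> 'a tcell \<Rightarrow> 'a tcell" where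
  "tcompose p x y = (case (x, y) of ((t, f), (u, g)) \<Rightarrow>
      (tcomp p t u, restrict (lcomp p t u f g) (allpos (tcomp p t u))))"

fun comps :: "nat \<Rightarrow> 'a tcell list \<Rightarrow> 'a tcell" where
  "comps p [] = undefined"
| "comps p [x] = x"
| "comps p (x # y # zs) = tcompose p x (comps p (y # zs))"

text \<open>Composite of a pasting diagram of cells of TX (labels of a d-shifted diagram).\<close>
function mu :: "nat \<Rightarrow> ptree \<Rightarrow> (nat list \<Rightarrow> 'a tcell) \<Rightarrow> 'a tcell" where
  "mu d (PT ts) G =
     (if ts = [] then G [0]
      else comps d (map (\<lambda>(i, t). mu (Suc d) t (\<lambda>c. G (i # c))) (zip [0..<length ts] ts)))"
  by pat_completeness auto
termination
  apply (relation "measure (\<lambda>(d, t, G). size t)")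
   apply simp
  apply (auto dest!: set_zip_rightD)
  apply (metis less_Suc_eq_le order_refl size_list_estimation')
  done

definition muT :: "'a tcell tcell \<Rightarrow> 'a tcell" where
  "muT x = (case x of (t, G) \<Rightarrow> mu 0 t G)"

section \<open>Collections, tensor, operads\<close>

text \<open>K \<otimes> K' for collections k : K \<rightarrow> T1, k' : K' \<rightarrow> T1: the pullback of k along T!.
  Its structure map is (a, b) \<mapsto> muT (T k' b).\<close>
definition tensor :: "nat \<Rightarrow> 'a gset \<Rightarrow> (nat \<Rightarrow> 'a \<Rightarrow> t1cell) \<Rightarrow> 'b gset \<Rightarrow> ('a \<times> 'b tcell) gset" where
  "tensor n K k K' = \<lparr>gcells = (\<lambda>m. {(a, b). a \<in> gcells K m \<and> b \<in> gcells (Tg n K') m \<and> k m a = Tbang m b}),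
     gsrc = (\<lambda>m (a, b). (gsrc K m a, gsrc (Tg n K') m b)),
     gtgt = (\<lambda>m (a, b). (gtgt K m a, gtgt (Tg n K') m b))\<rparr>"

definition tensor_coll :: "(nat \<Rightarrow> 'b \<Rightarrow> t1cell) \<Rightarrow> nat \<Rightarrow> 'a \<times> 'b tcell \<Rightarrow> t1cell" where
  "tensor_coll k' m x = muT (Tmap k' m (snd x))"

definition operad ::
  "nat \<Rightarrow> 'a gset \<Rightarrow> (nat \<Rightarrow> 'a \<Rightarrow> t1cell) \<Rightarrow> (nat \<Rightarrow> unit \<Rightarrow> 'a) \<Rightarrow> (nat \<Rightarrow> 'a \<times> 'a tcell \<Rightarrow> 'a) \<Rightarrow> bool" where
  "operad n K k eK mK \<longleftrightarrow>
     is_gset n K \<and> gmap n K (T1 n) k \<and>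
     \<comment> \<open>unit: a map of collections I = (1, eta_1) \<rightarrow> K\<close>
     gmap n (one n) K eK \<and> (\<forall>m\<le>n. k m (eK m ()) = etaT (one n) m ()) \<and>
     \<comment> \<open>multiplication: a map of collections K \<otimes> K \<rightarrow> K\<close>
     gmap n (tensor n K k K) K mK \<and>
     (\<forall>m\<le>n. \<forall>x\<in>gcells (tensor n K k K) m. k m (mK m x) = tensor_coll k m x) \<and>
     \<comment> \<open>left unit law (I \<otimes> K \<cong> K, (*, eta_K a) \<mapsto> a)\<close>
     (\<forall>m\<le>n. \<forall>a\<in>gcells K m. mK m (eK m (), etaT K m a) = a) \<and>
     \<comment> \<open>right unit law (K \<otimes> I \<cong> K, (a, k a) \<mapsto> a)\<close>
     (\<forall>m\<le>n. \<forall>a\<in>gcells K m. mK m (a, Tmap eK m (k m a)) = a) \<and>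
     \<comment> \<open>associativity, via the canonical iso K\<otimes>(K\<otimes>K) \<rightarrow> (K\<otimes>K)\<otimes>K,
        (a, B) \<mapsto> ((a, T fst B), mu_K (T snd B))\<close>
     (\<forall>m\<le>n. \<forall>x\<in>gcells (tensor n K k (tensor n K k K)) m.
        mK m (mK m (fst x, Tmap (\<lambda>_. fst) m (snd x)), muT (Tmap (\<lambda>_. snd) m (snd x)))
        = mK m (fst x, Tmap mK m (snd x)))"

section \<open>Contractions\<close>

definition fib :: "'a gset \<Rightarrow> (nat \<Rightarrow> 'a \<Rightarrow> t1cell) \<Rightarrow> nat \<Rightarrow> t1cell \<Rightarrow> 'a set" where
  "fib K k m x = {a \<in> gcells K m. k m a = x}"

definition Cset :: "nat \<Rightarrow> 'a gset \<Rightarrow> (nat \<Rightarrow> 'a \<Rightarrow> t1cell) \<Rightarrow> nat \<Rightarrow> t1cell \<Rightarrow> ('a \<times> 'a) set" where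
  "Cset n K k m p =
     (if m = 1 then fib K k 0 (gsrc (T1 n) 1 p) \<times> fib K k 0 (gtgt (T1 n) 1 p)
      else {(a, b). a \<in> fib K k (m-1) (gsrc (T1 n) m p) \<and> b \<in> fib K k (m-1) (gtgt (T1 n) m p) \<and>
                    gsrc K (m-1) a = gsrc K (m-1) b \<and> gtgt K (m-1) a = gtgt K (m-1) b})"

text \<open>Identity cell id_alpha in T1: in this representation an (m-1)-cell (a labelled pasting
  diagram of dimension \<le> m-1) regarded as an m-cell is its own identity.\<close>
definition tid :: "t1cell \<Rightarrow> t1cell" where
  "tid a = a"

definition parallel :: "'a gset \<Rightarrow> nat \<Rightarrow> 'a \<Rightarrow> 'a \<Rightarrow> bool" where
  "parallel X m a b \<longleftrightarrow> (m = 0 \<or> (gsrc X m a = gsrc X m b \<and> gtgt X m a = gtgt X m b))"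

definition contraction ::
  "nat \<Rightarrow> 'a gset \<Rightarrow> (nat \<Rightarrow> 'a \<Rightarrow> t1cell) \<Rightarrow> (nat \<Rightarrow> t1cell \<Rightarrow> 'a \<times> 'a \<Rightarrow> 'a) \<Rightarrow> bool" where
  "contraction n K k gam \<longleftrightarrow>
     (\<forall>m. 1 \<le> m \<and> m \<le> n \<longrightarrow> (\<forall>\<alpha>\<in>gcells (T1 n) (m-1). \<forall>ab\<in>Cset n K k m (tid \<alpha>).
         gam m \<alpha> ab \<in> fib K k m (tid \<alpha>) \<and>
         gsrc K m (gam m \<alpha> ab) = fst ab \<and> gtgt K m (gam m \<alpha> ab) = snd ab)) \<and>
     (\<forall>a\<in>gcells K n. \<forall>b\<in>gcells K n. parallel K n a b \<and> k n a = k n b \<longrightarrow> a = b)"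

section \<open>Systems of compositions\<close>

definition beta :: "nat \<Rightarrow> nat \<Rightarrow> nat \<Rightarrow> t1cell" where
  "beta n m p = (if p = m then etaT (one n) m ()
                 else tcompose p (etaT (one n) m ()) (etaT (one n) m ()))"

definition Sg :: "nat \<Rightarrow> t1cell gset" where
  "Sg n = \<lparr>gcells = (\<lambda>m. if m \<le> n then {beta n m p | p. p \<le> m} else {}),
           gsrc = gsrc (T1 n), gtgt = gtgt (T1 n)\<rparr>"

definition comp_system ::
  "nat \<Rightarrow> 'a gset \<Rightarrow> (nat \<Rightarrow> 'a \<Rightarrow> t1cell) \<Rightarrow> (nat \<Rightarrow> unit \<Rightarrow> 'a) \<Rightarrow> (nat \<Rightarrow> t1cell \<Rightarrow> 'a) \<Rightarrow> bool" where
  "comp_system n K k eK sig \<longleftrightarrow>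
     gmap n (Sg n) K sig \<and>
     (\<forall>m\<le>n. \<forall>x\<in>gcells (Sg n) m. k m (sig m x) = x) \<and>
     (\<forall>m\<le>n. sig m (beta n m m) = eK m ())"

end

theory Submission
  imports Defs
begin


fun wrap :: "nat \<Rightarrow> ptree \<Rightarrow> ptree" where
  "wrap 0 t = t"
| "wrap (Suc d) t = PT [wrap d t]"

lemma globe_wrap: "globe d = wrap d (PT [])"
  by (induction d) auto

lemma tcomp_wrap: "tcomp d (wrap d (PT us)) (wrap d (PT vs)) = wrap d (PT (us @ vs))"
  by (induction d) auto

lemma tcomp_globe: "p < m \<Longrightarrow> tcomp p (globe m) (globe m) = wrap p (PT [globe (m-p-1), globe (m-p-1)])"
proof (induction p arbitrary: m)
  case 0 then show ?case by (cases m) auto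
next
  case (Suc p) then show ?case by (cases m) auto
qed

lemma wrap_decomp: "\<exists>d ts. x = wrap d (PT ts) \<and> length ts \<noteq> 1"
proof (induction x)
  case (PT ts)
  show ?case
  proof (cases "length ts = 1")
    case True
    then obtain t where ts: "ts = [t]" by (cases ts) auto
    with PT obtain d us where "t = wrap d (PT us)" "length us \<noteq> 1" by auto
    then have "PT ts = wrap (Suc d) (PT us)" using ts by simp
    then show ?thesis using \<open>length us \<noteq> 1\<close> by blast
  next
    case False
    then show ?thesis by (metis wrap.simps(1))
  qed
qed

lemma hle_wrap: "hle m (wrap d T) \<longleftrightarrow> d \<le> m \<and> hle (m - d) T"
proof (induction d arbitrary: m)
  case 0 then show ?case by simp
next
  case (Suc d) then show ?case by (cases m) auto
qed

lemma trunc_hle: "hle m x \<Longrightarrow> trunc m x = x"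
proof (induction m arbitrary: x)
  case 0 then show ?case by (cases x) auto
next
  case (Suc m) then show ?case by (cases x) (auto intro: map_idI)
qed

lemma hle_trunc: "hle j (trunc j x)"
proof (induction j arbitrary: x)
  case 0 then show ?case by simp
next
  case (Suc j) then show ?case by (cases x) auto
qed

lemma hle_mono: "hle m x \<Longrightarrow> m \<le> m' \<Longrightarrow> hle m' x"
proof (induction m arbitrary: x m')
  case 0 then show ?case by (cases x; cases m') auto
next
  case (Suc m) then show ?case by (cases x; cases m') auto
qed

lemma trunc_trunc: "trunc j (trunc j' x) = trunc (min j j') x"
proof (induction j arbitrary: j' x)
  case 0 then show ?case by simp
next
  case (Suc j) then show ?case by (cases j'; cases x) auto
qed

lemma trunc_wrap: "d \<le> j \<Longrightarrow> trunc j (wrap d T) = wrap d (trunc (j - d) T)"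
proof (induction d arbitrary: j)
  case 0 then show ?case by simp
next
  case (Suc d) then show ?case by (cases j) auto
qed

lemma trunc_globe: "trunc j (globe i) = globe (min i j)"
proof (induction i arbitrary: j)
  case 0 then show ?case by (cases j) auto
next
  case (Suc i) then show ?case by (cases j) auto
qed

lemma tcomp_id_left: "tcomp j (trunc j x) x = x"
proof (induction j arbitrary: x)
  case 0 then show ?case by (cases x) auto
next
  case (Suc j)
  obtain ts where x: "x = PT ts" by (cases x)
  have "map2 (tcomp j) (map (trunc j) ts) ts = ts"
    by (induction ts) (auto simp: Suc)
  then show ?case by (simp add: x)
qed

lemma tcomp_id_right: "tcomp j x (trunc j x) = x"
proof (induction j arbitrary: x)
  case 0 then show ?case by (cases x) auto
next
  case (Suc j)
  obtain ts where x: "x = PT ts" by (cases x)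
  have "map2 (tcomp j) ts (map (trunc j) ts) = ts"
    by (induction ts) (auto simp: Suc)
  then show ?case by (simp add: x)
qed

lemma size_wrap_less: "size (wrap d (PT [t])) < size (wrap d (PT (t # u # us)))"
  by (induction d) auto

lemma size_wrap_less2: "size (wrap d (PT (u # us))) < size (wrap d (PT (t # u # us)))"
  by (induction d) auto



lemma pos_len: "c \<in> pos t d \<Longrightarrow> length c = Suc d"
  by (induction t d arbitrary: c rule: pos.induct) auto

lemma pos_psrc_ptgt: "c \<in> pos t (Suc d) \<Longrightarrow> psrc c \<in> pos t d \<and> ptgt c \<in> pos t d"
proof (induction t d arbitrary: c rule: pos.induct)
  case (1 ts)
  then obtain i c' where c: "c = i # c'" "i < length ts" "c' \<in> pos (ts ! i) 0" by auto
  then have "length c' = 1" using pos_len by fastforce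
  then obtain j where "c' = [j]" by (cases c') auto
  then show ?case using c by auto
next
  case (2 ts d)
  then obtain i c' where c: "c = i # c'" "i < length ts" "c' \<in> pos (ts ! i) (Suc d)" by auto
  obtain ts' where tsi: "ts ! i = PT ts'" by (cases "ts ! i")
  from c(3) tsi obtain j c'' where c': "c' = j # c''" "c'' \<in> pos (ts' ! j) d" by auto
  have "length c'' = Suc d" using c'(2) pos_len by blast
  then obtain a c3 where "c'' = a # c3" by (cases c'') auto
  then have "psrc c = i # psrc c'" "ptgt c = i # ptgt c'" using c c' by auto
  with 2 c show ?case by auto
qed

lemma psrc_butlast: "length c \<ge> 2 \<Longrightarrow> psrc c = butlast c"
  by (induction c rule: psrc.induct) auto

lemma ptgt_butlast: "length c \<ge> 2 \<Longrightarrow> ptgt c = butlast (butlast c) @ [Suc (last (butlast c))]"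
  by (induction c rule: ptgt.induct) auto

lemma pos_trunc: "pos (trunc j t) d \<subseteq> pos t d"
proof (induction j arbitrary: t d)
  case 0 then show ?case by (cases t; cases d) auto
next
  case (Suc j)
  obtain ts where t: "t = PT ts" by (cases t)
  show ?case
  proof (cases d)
    case 0 then show ?thesis by (auto simp: t)
  next
    case (Suc d') then show ?thesis by (auto simp: t intro: subsetD[OF Suc.IH])
  qed
qed

lemma allpos_trunc: "allpos (trunc j t) \<subseteq> allpos t"
  using pos_trunc unfolding allpos_def by blast

lemma pos_wrap: "pos (wrap p T) d =
   (if d < p then {replicate d 0 @ [j] | j. j \<le> 1} else (\<lambda>c. replicate p 0 @ c) ` pos T (d - p))"
proof (induction p arbitrary: d)
  case 0 then show ?case by simp
next
  case (Suc p)
  show ?case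
  proof (cases d)
    case 0 then show ?thesis by (auto simp: le_Suc_eq)
  next
    case (Suc d') then show ?thesis using Suc.IH[of d'] by auto
  qed
qed

lemma pos_PTnil: "pos (PT []) d = (if d = 0 then {[0]} else {})"
  by (cases d) auto

lemma pos_globe: "pos (globe i) d =
   (if d < i then {replicate d 0 @ [j] | j. j \<le> 1} else if d = i then {replicate i 0 @ [0]} else {})"
  by (auto simp: globe_wrap pos_wrap pos_PTnil)

lemma pos_PT2: "pos (PT [g, g]) d =
   (if d = 0 then {[0],[1],[2]} else {i # c | i c. i \<le> 1 \<and> c \<in> pos g (d - 1)})"
proof (cases d)
  case 0 then show ?thesis by auto
next
  case (Suc d')
  have h1: "\<And>i. i < Suc (Suc 0) \<Longrightarrow> [g, g] ! i = g" by (auto simp: less_Suc_eq)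
  have h2: "\<And>i. i \<le> Suc 0 \<Longrightarrow> [g, g] ! i = g" by (auto simp: le_Suc_eq)
  show ?thesis using Suc by (auto simp: h1 h2)
qed

definition Bt :: "nat \<Rightarrow> nat \<Rightarrow> ptree" where
  "Bt m p = wrap p (PT [globe (m-p-1), globe (m-p-1)])"

lemma pos_Bt: "c \<in> pos (Bt m p) e \<Longrightarrow> p < m \<Longrightarrow>
   (e < p \<and> (\<exists>j\<le>1. c = replicate e 0 @ [j])) \<or>
   (e = p \<and> (\<exists>j\<le>2. c = replicate p 0 @ [j])) \<or>
   (p < e \<and> e \<le> m \<and> (\<exists>i j. i \<le> 1 \<and> j \<le> 1 \<and> (e = m \<longrightarrow> j = 0) \<and>
        c = replicate p 0 @ i # replicate (e - p - 1) 0 @ [j]))"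
  unfolding Bt_def pos_wrap pos_PT2 pos_globe
  apply (auto split: if_splits simp: numeral_2_eq_2 le_Suc_eq)
  done



lemma unit_fun_eq: "(f :: 'x \<Rightarrow> unit) = (\<lambda>_. ())" by (rule ext) simp

lemma pos_le: "c \<in> pos t d \<Longrightarrow> hle m t \<Longrightarrow> d \<le> m"
proof (induction t d arbitrary: c m rule: pos.induct)
  case (1 ts) then show ?case by simp
next
  case (2 ts d)
  then obtain i c' where "i < length ts" "c' \<in> pos (ts!i) d" "c = i # c'" by auto
  moreover from 2(3) obtain m' where "m = Suc m'"
    by (cases m) (use \<open>i < length ts\<close> in auto)
  ultimately show ?case using 2 by (auto simp: nth_mem)
qed

lemma T1_cells: "m \<le> n \<Longrightarrow> gcells (T1 n) m = {(t, \<lambda>_. ()) | t. hle m t}"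
  apply (auto simp: T1_def Tg_def labels_def one_def extensional_def unit_fun_eq)
  apply (drule (1) pos_le) apply simp
  done

lemma T1_src: "gsrc (T1 n) m x = (trunc (m-1) (fst x), \<lambda>_. ())"
  by (cases x) (simp add: T1_def Tg_def unit_fun_eq)

lemma T1_tgt: "gtgt (T1 n) m x = (trunc (m-1) (fst x), \<lambda>_. ())"
  by (cases x) (simp add: T1_def Tg_def unit_fun_eq)

lemma isrc_Suc': "isrc X m (Suc j) a = isrc X (m-1) j (gsrc X m a)"
  by (induction j) auto

lemma itgt_Suc': "itgt X m (Suc j) a = itgt X (m-1) j (gtgt X m a)"
  by (induction j) auto

locale L =
  fixes n :: nat and K :: "'a gset" and k :: "nat \<Rightarrow> 'a \<Rightarrow> t1cell"
    and eK :: "nat \<Rightarrow> unit \<Rightarrow> 'a" and mK :: "nat \<Rightarrow> 'a \<times> 'a tcell \<Rightarrow> 'a"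
    and gam :: "nat \<Rightarrow> t1cell \<Rightarrow> 'a \<times> 'a \<Rightarrow> 'a" and sig :: "nat \<Rightarrow> t1cell \<Rightarrow> 'a"
  assumes op: "operad n K k eK mK" and con: "contraction n K k gam" and cs: "comp_system n K k eK sig"
begin

lemma gs: "is_gset n K" using op by (simp add: operad_def)
lemma kmap: "gmap n K (T1 n) k" using op by (simp add: operad_def)

lemma K_le: "a \<in> gcells K m \<Longrightarrow> m \<le> n"
  using gs unfolding is_gset_def by (metis empty_iff not_le)

lemma K_src: "a \<in> gcells K m \<Longrightarrow> 1 \<le> m \<Longrightarrow> gsrc K m a \<in> gcells K (m-1) \<and> gtgt K m a \<in> gcells K (m-1)"
  using gs K_le unfolding is_gset_def by blast

lemma K_glob: "a \<in> gcells K m \<Longrightarrow> 2 \<le> m \<Longrightarrow>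
   gsrc K (m-1) (gsrc K m a) = gsrc K (m-1) (gtgt K m a) \<and> gtgt K (m-1) (gsrc K m a) = gtgt K (m-1) (gtgt K m a)"
  using gs K_le unfolding is_gset_def by blast

definition kt :: "nat \<Rightarrow> 'a \<Rightarrow> ptree" where "kt m a = fst (k m a)"

lemma k_eq: "a \<in> gcells K m \<Longrightarrow> k m a = (kt m a, \<lambda>_. ()) \<and> hle m (kt m a)"
proof -
  assume a: "a \<in> gcells K m"
  have "k m a \<in> gcells (T1 n) m" using kmap a K_le[OF a] unfolding gmap_def by blast
  then show ?thesis using T1_cells[OF K_le[OF a]] by (auto simp: kt_def)
qed

lemma kt_src: "a \<in> gcells K m \<Longrightarrow> 1 \<le> m \<Longrightarrow>
  kt (m-1) (gsrc K m a) = trunc (m-1) (kt m a) \<and> kt (m-1) (gtgt K m a) = trunc (m-1) (kt m a)"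
proof -
  assume a: "a \<in> gcells K m" and m: "1 \<le> m"
  have "k (m-1) (gsrc K m a) = gsrc (T1 n) m (k m a)" "k (m-1) (gtgt K m a) = gtgt (T1 n) m (k m a)"
    using kmap a K_le[OF a] m unfolding gmap_def by blast+
  then show ?thesis by (simp add: kt_def T1_src T1_tgt)
qed

lemma isrc_mem: "a \<in> gcells K m \<Longrightarrow> j \<le> m \<Longrightarrow> isrc K m j a \<in> gcells K (m-j) \<and> itgt K m j a \<in> gcells K (m-j)"
proof (induction j)
  case 0 then show ?case by simp
next
  case (Suc j)
  then have "isrc K m j a \<in> gcells K (m-j)" "itgt K m j a \<in> gcells K (m-j)" "1 \<le> m - j" by auto
  then show ?case using K_src[of "isrc K m j a" "m-j"] K_src[of "itgt K m j a" "m-j"] by auto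
qed

lemma kt_isrc: "a \<in> gcells K m \<Longrightarrow> j \<le> m \<Longrightarrow>
   kt (m-j) (isrc K m j a) = trunc (m-j) (kt m a) \<and> kt (m-j) (itgt K m j a) = trunc (m-j) (kt m a)"
proof (induction j)
  case 0 then show ?case using k_eq trunc_hle by auto
next
  case (Suc j)
  then have h: "isrc K m j a \<in> gcells K (m-j)" "itgt K m j a \<in> gcells K (m-j)" "1 \<le> m - j"
    using isrc_mem by auto
  show ?case using kt_src[OF h(1) h(3)] kt_src[OF h(2) h(3)] Suc
    by (simp add: trunc_trunc min_def)
qed

lemma glob1: "a \<in> gcells K m \<Longrightarrow> j < m \<Longrightarrow>
   gsrc K (m-j) (itgt K m j a) = isrc K m (Suc j) a \<and> gtgt K (m-j) (isrc K m j a) = itgt K m (Suc j) a"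
proof (induction j)
  case 0 then show ?case by simp
next
  case (Suc j)
  then have h: "isrc K m j a \<in> gcells K (m-j)" "itgt K m j a \<in> gcells K (m-j)" "2 \<le> m - j"
    using isrc_mem by auto
  show ?case using K_glob[OF h(1) h(3)] K_glob[OF h(2) h(3)] Suc
    by simp
qed

lemma glob2: "b \<in> gcells K m \<Longrightarrow> 2 \<le> m \<Longrightarrow> 1 \<le> j \<Longrightarrow>
   itgt K (m-1) j (gsrc K m b) = itgt K (m-1) j (gtgt K m b) \<and>
   isrc K (m-1) j (gtgt K m b) = isrc K (m-1) j (gsrc K m b)"
proof (induction j)
  case 0 then show ?case by simp
next
  case (Suc j)
  show ?case
  proof (cases j)
    case 0 then show ?thesis using K_glob[OF Suc.prems(1,2)] by simp
  next
    case (Suc j') then show ?thesis using Suc.IH Suc.prems by simp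
  qed
qed

end


lemma hle_globe: "hle j (globe j)"
  by (induction j) auto

lemma hle_Bt: "p < m \<Longrightarrow> hle m (Bt m p)"
proof -
  assume "p < m"
  then have e: "m - p = Suc (m - Suc p)" by arith
  show ?thesis using \<open>p < m\<close> by (simp add: Bt_def hle_wrap e hle_globe)
qed

context L begin

lemma H1:
  assumes a: "a \<in> gcells K m" and d: "d < m"
  shows "gsrc K (Suc d) (isrc K m (m - Suc d) a) = isrc K m (m - d) a"
    "gtgt K (Suc d) (isrc K m (m - Suc d) a) = itgt K m (m - d) a"
    "gsrc K (Suc d) (itgt K m (m - Suc d) a) = isrc K m (m - d) a"
    "gtgt K (Suc d) (itgt K m (m - Suc d) a) = itgt K m (m - d) a"
proof -
  define j where "j = m - Suc d"
  have e1: "m - d = Suc j" "m - j = Suc d" "j < m" using d by (auto simp: j_def)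
  show "gsrc K (Suc d) (isrc K m (m - Suc d) a) = isrc K m (m - d) a"
    "gtgt K (Suc d) (itgt K m (m - Suc d) a) = itgt K m (m - d) a"
    unfolding j_def[symmetric] e1 by (simp_all add: e1)
  show "gtgt K (Suc d) (isrc K m (m - Suc d) a) = itgt K m (m - d) a"
    "gsrc K (Suc d) (itgt K m (m - Suc d) a) = isrc K m (m - d) a"
    unfolding j_def[symmetric] e1 using glob1[OF a e1(3)] by (simp_all add: e1)
qed

lemma LABEQ:
  assumes b: "b \<in> gcells K m" and m: "1 \<le> m" and e: "e \<le> m - 1"
  shows "isrc K m (m-e) b = isrc K (m-1) (m-1-e) (gsrc K m b)"
    "itgt K m (m-e) b = itgt K (m-1) (m-1-e) (gtgt K m b)"
    "e < m - 1 \<Longrightarrow> itgt K m (m-e) b = itgt K (m-1) (m-1-e) (gsrc K m b)"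
    "e < m - 1 \<Longrightarrow> isrc K m (m-e) b = isrc K (m-1) (m-1-e) (gtgt K m b)"
proof -
  have me: "m - e = Suc (m - 1 - e)" using m e by arith
  show 1: "isrc K m (m-e) b = isrc K (m-1) (m-1-e) (gsrc K m b)"
    unfolding me isrc_Suc' ..
  show 2: "itgt K m (m-e) b = itgt K (m-1) (m-1-e) (gtgt K m b)"
    unfolding me itgt_Suc' ..
  show "e < m - 1 \<Longrightarrow> itgt K m (m-e) b = itgt K (m-1) (m-1-e) (gsrc K m b)"
    using 2 glob2[OF b] by simp
  show "e < m - 1 \<Longrightarrow> isrc K m (m-e) b = isrc K (m-1) (m-1-e) (gtgt K m b)"
    using 1 glob2[OF b] by simp
qed

definition pick :: "nat \<Rightarrow> 'a \<Rightarrow> 'a \<Rightarrow> nat list \<Rightarrow> 'a" where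
  "pick p a1 a2 c = (if (p < length c - 1 \<and> 1 \<le> c ! p) \<or> (length c - 1 = p \<and> last c = 2) then a2 else a1)"

definition lab :: "nat \<Rightarrow> nat \<Rightarrow> 'a \<Rightarrow> 'a \<Rightarrow> nat list \<Rightarrow> 'a" where
  "lab m p a1 a2 c = (if last c = 0 then isrc K m (m - (length c - 1)) (pick p a1 a2 c)
                      else itgt K m (m - (length c - 1)) (pick p a1 a2 c))"

lemma lab_L2:
  assumes a1: "a1 \<in> gcells K m" and a2: "a2 \<in> gcells K m" and p: "p < m"
    and cp: "itgt K m (m-p) a1 = isrc K m (m-p) a2"
    and c: "c \<in> pos (Bt m p) (Suc e)"
  shows "gsrc K (Suc e) (lab m p a1 a2 c) = lab m p a1 a2 (psrc c) \<and>
         gtgt K (Suc e) (lab m p a1 a2 c) = lab m p a1 a2 (ptgt c)"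
proof -
  have lc: "length c = Suc (Suc e)" using c pos_len by blast
  then have ps: "psrc c = butlast c" and pt: "ptgt c = butlast (butlast c) @ [Suc (last (butlast c))]"
    using psrc_butlast ptgt_butlast by auto
  from pos_Bt[OF c p] show ?thesis
  proof (elim disjE conjE exE)
    fix j assume e: "Suc e < p" and j: "j \<le> 1" and cj: "c = replicate (Suc e) 0 @ [j]"
    have em: "e < m" using e p by simp
    have bl: "butlast c = replicate e 0 @ [0]" using cj by (simp add: replicate_append_same)
    show ?thesis using j e
      unfolding ps pt bl by (auto simp: cj lab_def pick_def H1[OF a1 em] le_Suc_eq)
  next
    fix j assume e: "Suc e = p" and j: "j \<le> 2" and cj0: "c = replicate p 0 @ [j]"
    have em: "e < m" using e p by simp
    have cj: "c = replicate (Suc e) 0 @ [j]" using cj0 e by simp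
    have cp': "itgt K m (m - Suc e) a1 = isrc K m (m - Suc e) a2" using cp e by simp
    have bl: "butlast c = replicate e 0 @ [0]" using cj by (simp add: replicate_append_same)
    have x1: "isrc K m (m - e) a2 = isrc K m (m - e) a1"
      using H1(1)[OF a2 em] H1(3)[OF a1 em] cp' by simp
    have x2: "itgt K m (m - e) a2 = itgt K m (m - e) a1"
      using H1(2)[OF a2 em] H1(4)[OF a1 em] cp' by simp
    have j3: "j = 0 \<or> j = 1 \<or> j = 2" using j by auto
    show ?thesis using j3 e
      unfolding ps pt bl by (auto simp: cj lab_def pick_def H1[OF a1 em] H1[OF a2 em] x1 x2)
  next
    fix i j assume e: "p < Suc e" "Suc e \<le> m" and ij: "i \<le> 1" "j \<le> 1" "Suc e = m \<longrightarrow> j = 0"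
      and cj: "c = replicate p 0 @ i # replicate (Suc e - p - 1) 0 @ [j]"
    have em: "e < m" using e by simp
    show ?thesis
    proof (cases "e = p")
      case True
      have cj': "c = replicate p 0 @ [i, j]" using cj True by simp
      have bl: "butlast c = replicate p 0 @ [i]" using cj' by (simp add: butlast_append)
      have i2: "i = 0 \<or> i = 1" using ij by auto
      have j2: "j = 0 \<or> j = 1" using ij by auto
      show ?thesis using i2 j2 True ij
        unfolding ps pt bl by (auto simp: cj' lab_def pick_def H1[OF a1 p] H1[OF a2 p] cp nth_append)
    next
      case False
      then have ep: "p < e" using e by simp
      have cj': "c = replicate p 0 @ i # replicate (e - p) 0 @ [j]" using cj by simp
      have bl: "butlast c = replicate p 0 @ i # replicate (e - p - 1) 0 @ [0]"
        using cj' ep by (simp add: butlast_append replicate_append_same[symmetric]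
             del: replicate_append_same) (metis Suc_diff_Suc replicate_Suc replicate_append_same)
      have bbl: "butlast (butlast c) = replicate p 0 @ i # replicate (e - p - 1) 0"
        unfolding bl by (simp add: butlast_append)
      have j2: "j = 0 \<or> j = 1" using ij by auto
      show ?thesis using j2 ep ij
        unfolding ps pt bbl unfolding bl by (auto simp: cj' lab_def pick_def H1[OF a1 em] H1[OF a2 em] nth_append)
    qed
  qed
qed

end


lemma mu_wrap: "mu d (wrap p T) G = mu (d + p) T (\<lambda>c. G (replicate p 0 @ c))"
proof (induction p arbitrary: d G)
  case 0 then show ?case by simp
next
  case (Suc p)
  have "mu d (wrap (Suc p) T) G = mu (Suc d) (wrap p T) (\<lambda>c. G (0 # c))" by simp
  also have "\<dots> = mu (d + Suc p) T (\<lambda>c. G (replicate (Suc p) 0 @ c))" using Suc by simp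
  finally show ?case .
qed

lemma mu_globe: "mu d (globe j) G = G (replicate j 0 @ [0])"
proof (induction j arbitrary: d G)
  case 0 then show ?case by simp
next
  case (Suc j)
  have "mu d (globe (Suc j)) G = mu (Suc d) (globe j) (\<lambda>c. G (0 # c))" by simp
  then show ?case using Suc by simp
qed

lemma mu_PT2: "mu d (PT [g, g]) G = tcompose d (mu (Suc d) g (\<lambda>c. G (0 # c))) (mu (Suc d) g (\<lambda>c. G (1 # c)))"
  by (simp add: upt_rec)

lemma restrict_unit: "restrict (f :: 'x \<Rightarrow> unit) A = (\<lambda>_. ())" by (rule ext) simp

lemma etaT_one: "etaT (one n) m () = (globe m, \<lambda>_. ())"
  by (simp add: etaT_def unit_fun_eq)

lemma beta_eq: "p < m \<Longrightarrow> beta n m p = (Bt m p, \<lambda>_. ())"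
  by (simp add: beta_def etaT_one tcompose_def tcomp_globe Bt_def unit_fun_eq)

lemma beta_mm: "beta n m m = (globe m, \<lambda>_. ())"
  by (simp add: beta_def etaT_one)

context L begin

lemma sigmap: "gmap n (Sg n) K sig" using cs by (simp add: comp_system_def)
lemma sig_k: "m \<le> n \<Longrightarrow> x \<in> gcells (Sg n) m \<Longrightarrow> k m (sig m x) = x" using cs by (simp add: comp_system_def)
lemma sig_eta: "m \<le> n \<Longrightarrow> sig m (beta n m m) = eK m ()" using cs by (simp add: comp_system_def)
lemma mmap: "gmap n (tensor n K k K) K mK" using op by (simp add: operad_def)
lemma mK_k: "m \<le> n \<Longrightarrow> x \<in> gcells (tensor n K k K) m \<Longrightarrow> k m (mK m x) = tensor_coll k m x"
  using op by (simp add: operad_def)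
lemma lunit: "m \<le> n \<Longrightarrow> a \<in> gcells K m \<Longrightarrow> mK m (eK m (), etaT K m a) = a"
  using op by (simp add: operad_def)

lemma beta_Sg: "p \<le> m \<Longrightarrow> m \<le> n \<Longrightarrow> beta n m p \<in> gcells (Sg n) m"
  by (auto simp: Sg_def)

lemma sig_cell: "p \<le> m \<Longrightarrow> m \<le> n \<Longrightarrow> sig m (beta n m p) \<in> gcells K m"
  using sigmap beta_Sg unfolding gmap_def by blast

definition Bl :: "nat \<Rightarrow> nat \<Rightarrow> 'a \<Rightarrow> 'a \<Rightarrow> 'a tcell" where
  "Bl m p a1 a2 = (Bt m p, restrict (lab m p a1 a2) (allpos (Bt m p)))"

definition comp :: "nat \<Rightarrow> nat \<Rightarrow> 'a \<Rightarrow> 'a \<Rightarrow> 'a" where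
  "comp m p a1 a2 = mK m (sig m (beta n m p), Bl m p a1 a2)"

lemma pick_cases: "pick p a1 a2 c = a1 \<or> pick p a1 a2 c = a2"
  by (simp add: pick_def)

lemma Bl_cell:
  assumes a1: "a1 \<in> gcells K m" and a2: "a2 \<in> gcells K m" and p: "p < m"
    and cp: "itgt K m (m-p) a1 = isrc K m (m-p) a2"
  shows "Bl m p a1 a2 \<in> gcells (Tg n K) m"
proof -
  have mn: "m \<le> n" using K_le[OF a1] .
  have hl: "hle m (Bt m p)" using hle_Bt[OF p] .
  have L1: "lab m p a1 a2 c \<in> gcells K e" if c: "c \<in> pos (Bt m p) e" for c e
  proof -
    have lc: "length c - 1 = e" using pos_len[OF c] by simp
    have em: "e \<le> m" using pos_le[OF c hl] .
    have b: "pick p a1 a2 c \<in> gcells K m" using pick_cases a1 a2 by metis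
    show ?thesis unfolding lab_def lc using isrc_mem[OF b, of "m - e"] em by auto
  qed
  have inA: "c \<in> pos t e \<Longrightarrow> c \<in> allpos t" for c t e by (auto simp: allpos_def)
  show ?thesis
    unfolding Tg_def Bl_def labels_def using mn hl
    apply (simp add: inA L1)
    apply (intro allI ballI)
    subgoal for e c
      using pos_psrc_ptgt[of c "Bt m p" e] lab_L2[OF a1 a2 p cp, of c e] inA by auto
    done
qed

lemma tensor_cell:
  assumes a1: "a1 \<in> gcells K m" and a2: "a2 \<in> gcells K m" and p: "p < m"
    and cp: "itgt K m (m-p) a1 = isrc K m (m-p) a2"
  shows "(sig m (beta n m p), Bl m p a1 a2) \<in> gcells (tensor n K k K) m"
proof -
  have mn: "m \<le> n" using K_le[OF a1] .
  have "k m (sig m (beta n m p)) = beta n m p" using sig_k[OF mn beta_Sg[of p m]] p mn by simp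
  then show ?thesis
    using sig_cell[of p m] p mn Bl_cell[OF assms]
    by (simp add: tensor_def beta_eq[OF p] Tbang_def Tmap_def Bl_def restrict_unit)
qed

lemma comp_cell:
  assumes a1: "a1 \<in> gcells K m" and a2: "a2 \<in> gcells K m" and p: "p < m"
    and cp: "itgt K m (m-p) a1 = isrc K m (m-p) a2"
  shows "comp m p a1 a2 \<in> gcells K m"
  using mmap tensor_cell[OF assms] K_le[OF a1] unfolding gmap_def comp_def by blast

lemma top_pos: "p < m \<Longrightarrow> i \<le> 1 \<Longrightarrow> replicate p 0 @ i # replicate (m - p - 1) 0 @ [0] \<in> pos (Bt m p) m"
proof -
  assume p: "p < m" and i: "i \<le> 1"
  have "i # replicate (m - p - 1) 0 @ [0] \<in> pos (PT [globe (m-p-1), globe (m-p-1)]) (m - p)"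
    using p i by (auto simp: pos_PT2 pos_globe)
  then show ?thesis using p by (auto simp: Bt_def pos_wrap)
qed

lemma comp_k:
  assumes a1: "a1 \<in> gcells K m" and a2: "a2 \<in> gcells K m" and p: "p < m"
    and cp: "itgt K m (m-p) a1 = isrc K m (m-p) a2"
  shows "kt m (comp m p a1 a2) = tcomp p (kt m a1) (kt m a2)"
proof -
  have mn: "m \<le> n" using K_le[OF a1] .
  define G where "G = restrict (\<lambda>c. k (length c - 1) (restrict (lab m p a1 a2) (allpos (Bt m p)) c)) (allpos (Bt m p))"
  have G: "G (replicate p 0 @ i # replicate (m - p - 1) 0 @ [0]) = k m (if i = 0 then a1 else a2)"
    if i: "i \<le> 1" for i
  proof -
    have inA: "replicate p 0 @ i # replicate (m - p - 1) 0 @ [0] \<in> allpos (Bt m p)"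
      using top_pos[OF p i] by (auto simp: allpos_def)
    have "m - (m - p - 1 + (p + 1)) = 0" by simp
    then show ?thesis using inA i p unfolding G_def
      by (auto simp: lab_def pick_def nth_append)
  qed
  have "k m (comp m p a1 a2) = muT (Tmap k m (Bl m p a1 a2))"
    using mK_k[OF mn tensor_cell[OF assms]] by (simp add: comp_def tensor_coll_def)
  also have "\<dots> = mu 0 (Bt m p) G" by (simp add: muT_def Tmap_def Bl_def G_def)
  also have "\<dots> = tcompose p (G (replicate p 0 @ 0 # replicate (m - p - 1) 0 @ [0]))
                            (G (replicate p 0 @ 1 # replicate (m - p - 1) 0 @ [0]))"
    by (simp add: Bt_def mu_wrap mu_PT2 mu_globe)
  also have "\<dots> = tcompose p (k m a1) (k m a2)" using G[of 0] G[of 1] by simp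
  also have "\<dots> = (tcomp p (kt m a1) (kt m a2), \<lambda>_. ())"
    using k_eq[OF a1] k_eq[OF a2] by (simp add: tcompose_def unit_fun_eq)
  finally show ?thesis by (simp add: kt_def)
qed

end


lemma subt_wrap: "subt (wrap p T) (replicate p 0 @ c) = subt T c"
  by (induction p) auto

lemma subt_PT2: "i \<le> 1 \<Longrightarrow> subt (PT [g, g]) (i # c) = subt g c"
  by (cases i) auto

lemma subt_globe: "i \<le> j \<Longrightarrow> subt (globe j) (replicate i 0) = globe (j - i)"
proof (induction i arbitrary: j)
  case 0 then show ?case by simp
next
  case (Suc i) then show ?case by (cases j) auto
qed

lemma trunc_Bt_lt: "p < m' \<Longrightarrow> trunc m' (Bt (Suc m') p) = Bt m' p"
proof -
  assume p: "p < m'"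
  have e: "m' - p = Suc (m' - Suc p)" using p by arith
  have g: "trunc (m' - Suc p) (globe (m' - p)) = globe (m' - Suc p)" by (simp add: trunc_globe)
  show ?thesis using p g by (simp add: Bt_def trunc_wrap e del: globe.simps)
qed

lemma trunc_Bt_eq: "trunc m' (Bt (Suc m') m') = globe m'"
  by (simp add: Bt_def trunc_wrap globe_wrap)

lemma pos_Bt_top: "c \<in> pos (Bt m p) e \<Longrightarrow> p < m \<Longrightarrow> e \<le> m \<and> (e = m \<longrightarrow> last c = 0)"
  using pos_Bt[of c m p e] by auto

context L begin

lemma lab_src_eq:
  assumes a1: "a1 \<in> gcells K m" and a2: "a2 \<in> gcells K m" and m: "1 \<le> m"
    and lc: "length c = Suc e" and e: "e \<le> m - 1" and l: "last c \<noteq> 0 \<longrightarrow> e < m - 1"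
  shows "lab m p a1 a2 c = lab (m-1) p (gsrc K m a1) (gsrc K m a2) c"
proof -
  have pk: "pick p (gsrc K m a1) (gsrc K m a2) c = gsrc K m (pick p a1 a2 c)" by (simp add: pick_def)
  have b: "pick p a1 a2 c \<in> gcells K m" using pick_cases a1 a2 by metis
  show ?thesis unfolding lab_def pk lc using LABEQ(1,3)[OF b m e] l by simp
qed

lemma lab_tgt_eq:
  assumes a1: "a1 \<in> gcells K m" and a2: "a2 \<in> gcells K m" and m: "1 \<le> m"
    and lc: "length c = Suc e" and e: "e < m - 1"
  shows "lab m p a1 a2 c = lab (m-1) p (gtgt K m a1) (gtgt K m a2) c"
proof -
  have pk: "pick p (gtgt K m a1) (gtgt K m a2) c = gtgt K m (pick p a1 a2 c)" by (simp add: pick_def)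
  have b: "pick p a1 a2 c \<in> gcells K m" using pick_cases a1 a2 by metis
  show ?thesis unfolding lab_def pk lc using LABEQ(2,4)[OF b m] e by simp
qed

lemma tensor_src: "gsrc (tensor n K k K) m x = (gsrc K m (fst x), gsrc (Tg n K) m (snd x))"
  by (cases x) (simp add: tensor_def)
lemma tensor_tgt: "gtgt (tensor n K k K) m x = (gtgt K m (fst x), gtgt (Tg n K) m (snd x))"
  by (cases x) (simp add: tensor_def)

lemma mK_src:
  assumes x: "x \<in> gcells (tensor n K k K) m" and m: "1 \<le> m" and mn: "m \<le> n"
  shows "gsrc K m (mK m x) = mK (m-1) (gsrc K m (fst x), gsrc (Tg n K) m (snd x))"
    "gtgt K m (mK m x) = mK (m-1) (gtgt K m (fst x), gtgt (Tg n K) m (snd x))"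
  using mmap x m mn unfolding gmap_def tensor_src tensor_tgt by auto

lemma sig_src:
  assumes p: "p \<le> m" and m: "1 \<le> m" and mn: "m \<le> n"
  shows "gsrc K m (sig m (beta n m p)) = sig (m-1) (trunc (m-1) (fst (beta n m p)), \<lambda>_. ())"
    "gtgt K m (sig m (beta n m p)) = sig (m-1) (trunc (m-1) (fst (beta n m p)), \<lambda>_. ())"
proof -
  have "sig (m-1) (gsrc (Sg n) m (beta n m p)) = gsrc K m (sig m (beta n m p))"
       "sig (m-1) (gtgt (Sg n) m (beta n m p)) = gtgt K m (sig m (beta n m p))"
    using sigmap beta_Sg[OF p mn] m mn unfolding gmap_def by auto
  then show "gsrc K m (sig m (beta n m p)) = sig (m-1) (trunc (m-1) (fst (beta n m p)), \<lambda>_. ())"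
    "gtgt K m (sig m (beta n m p)) = sig (m-1) (trunc (m-1) (fst (beta n m p)), \<lambda>_. ())"
    by (simp_all add: Sg_def T1_src T1_tgt)
qed

end


context L begin

lemma top_tgt_lt:
  assumes p: "p < m'" and i: "i \<le> 1"
  defines "c \<equiv> replicate p 0 @ i # replicate (m' - p - 1) 0 @ [0]"
  defines "c' \<equiv> butlast c @ [length (kids (subt (Bt (Suc m') p) (butlast c)))]"
  shows "c' \<in> allpos (Bt (Suc m') p)"
    "lab (Suc m') p ua ub c' = gtgt K (Suc m') (if i = 0 then ua else ub)"
    "pick p b1 b2 c = (if i = 0 then b1 else b2)"
proof -
  have bl: "butlast c = replicate p 0 @ i # replicate (m' - p - 1) 0"
    unfolding c_def by (simp add: butlast_append)
  have e1: "Suc m' - p - 1 = m' - p" by simp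
  have n2: "[globe (m' - p), globe (m' - p)] ! i = globe (m' - p)" using i by (cases i) auto
  have e2: "m' - p - (m' - Suc p) = 1" using p by arith
  have "subt (Bt (Suc m') p) (butlast c) = globe 1"
    unfolding bl Bt_def subt_wrap using i p by (simp add: n2 e1 subt_globe e2 del: globe.simps)
  then have c': "c' = replicate p 0 @ i # replicate (m' - p - 1) 0 @ [1]"
    unfolding c'_def bl by simp
  have "i # replicate (m' - p - 1) 0 @ [1] \<in> pos (PT [globe (Suc m' - p - 1), globe (Suc m' - p - 1)]) (m' - p)"
    using p i by (auto simp: pos_PT2 pos_globe)
  then have "c' \<in> pos (Bt (Suc m') p) m'" using p unfolding c' by (auto simp: Bt_def pos_wrap)
  then show "c' \<in> allpos (Bt (Suc m') p)" by (auto simp: allpos_def)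
  have lc: "length c' - 1 = m'" unfolding c' using p by simp
  have "Suc m' - m' = 1" by simp
  then show "lab (Suc m') p ua ub c' = gtgt K (Suc m') (if i = 0 then ua else ub)"
    unfolding lab_def lc using i p by (simp add: c' pick_def nth_append)
  show "pick p b1 b2 c = (if i = 0 then b1 else b2)"
    using i p unfolding c_def pick_def by (simp add: nth_append)
qed

lemma comp_bnd_lt:
  assumes a1: "a1 \<in> gcells K (Suc m')" and a2: "a2 \<in> gcells K (Suc m')" and p: "p < m'"
    and cp: "itgt K (Suc m') (Suc m' - p) a1 = isrc K (Suc m') (Suc m' - p) a2"
  shows "gsrc K (Suc m') (comp (Suc m') p a1 a2) = comp m' p (gsrc K (Suc m') a1) (gsrc K (Suc m') a2)"
    "gtgt K (Suc m') (comp (Suc m') p a1 a2) = comp m' p (gtgt K (Suc m') a1) (gtgt K (Suc m') a2)"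
proof -
  define m where "m = Suc m'"
  have mn: "m \<le> n" using K_le[OF a1] m_def by simp
  have pm: "p < m" using p m_def by simp
  have x: "(sig m (beta n m p), Bl m p a1 a2) \<in> gcells (tensor n K k K) m"
    using tensor_cell[OF a1[folded m_def] a2[folded m_def] pm cp[folded m_def]] .
  have m1: "1 \<le> m" "m - 1 = m'" using m_def by auto
  have sg: "gsrc K m (sig m (beta n m p)) = sig m' (beta n m' p)"
     "gtgt K m (sig m (beta n m p)) = sig m' (beta n m' p)"
    using sig_src[of p m] pm m1 mn by (simp_all add: beta_eq m_def trunc_Bt_lt p)
  have sub: "allpos (Bt m' p) \<subseteq> allpos (Bt m p)"
    using allpos_trunc[of m' "Bt m p"] by (simp add: m_def trunc_Bt_lt p)
  have "gsrc (Tg n K) m (Bl m p a1 a2) = Bl m' p (gsrc K m a1) (gsrc K m a2)"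
  proof -
    have "restrict (restrict (lab m p a1 a2) (allpos (Bt m p))) (allpos (Bt m' p))
        = restrict (lab m' p (gsrc K m a1) (gsrc K m a2)) (allpos (Bt m' p))"
    proof (rule restrict_ext)
      fix c assume c: "c \<in> allpos (Bt m' p)"
      then obtain e where ce: "c \<in> pos (Bt m' p) e" by (auto simp: allpos_def)
      have t: "e \<le> m' \<and> (e = m' \<longrightarrow> last c = 0)" using pos_Bt_top[OF ce p] .
      have "lab m p a1 a2 c = lab (m-1) p (gsrc K m a1) (gsrc K m a2) c"
        using lab_src_eq[OF a1[folded m_def] a2[folded m_def] m1(1) pos_len[OF ce]] t m1 by auto
      then show "restrict (lab m p a1 a2) (allpos (Bt m p)) c = lab m' p (gsrc K m a1) (gsrc K m a2) c"
        using c sub m1 by auto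
    qed
    then show ?thesis by (simp add: Tg_def Bl_def m_def trunc_Bt_lt p)
  qed
  then show "gsrc K (Suc m') (comp (Suc m') p a1 a2) = comp m' p (gsrc K (Suc m') a1) (gsrc K (Suc m') a2)"
    using mK_src(1)[OF x m1(1) mn] sg m1 unfolding comp_def m_def[symmetric] by simp
  have "gtgt (Tg n K) m (Bl m p a1 a2) = Bl m' p (gtgt K m a1) (gtgt K m a2)"
  proof -
    have "restrict (\<lambda>c. if length c = m then restrict (lab m p a1 a2) (allpos (Bt m p))
                 (butlast c @ [length (kids (subt (Bt m p) (butlast c)))])
               else restrict (lab m p a1 a2) (allpos (Bt m p)) c) (allpos (Bt m' p))
        = restrict (lab m' p (gtgt K m a1) (gtgt K m a2)) (allpos (Bt m' p))"
    proof (rule restrict_ext)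
      fix c assume c: "c \<in> allpos (Bt m' p)"
      then obtain e where ce: "c \<in> pos (Bt m' p) e" by (auto simp: allpos_def)
      have lc: "length c = Suc e" using pos_len[OF ce] .
      have t: "e \<le> m'" using pos_Bt_top[OF ce p] by simp
      show "(if length c = m then restrict (lab m p a1 a2) (allpos (Bt m p))
                 (butlast c @ [length (kids (subt (Bt m p) (butlast c)))])
               else restrict (lab m p a1 a2) (allpos (Bt m p)) c) = lab m' p (gtgt K m a1) (gtgt K m a2) c"
      proof (cases "e = m'")
        case True
        from pos_Bt[OF ce p] True p obtain i where i: "i \<le> 1"
          and cf: "c = replicate p 0 @ i # replicate (m' - p - 1) 0 @ [0]" by auto
        have "lab m' p (gtgt K m a1) (gtgt K m a2) c = gtgt K m (if i = 0 then a1 else a2)"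
          unfolding lab_def using cf top_tgt_lt(3)[OF p i, of "gtgt K m a1" "gtgt K m a2"]
          by simp
        then show ?thesis using True lc top_tgt_lt(1)[OF p i] top_tgt_lt(2)[OF p i, where ua=a1 and ub=a2] cf m_def by auto
      next
        case False
        then have "lab m p a1 a2 c = lab (m-1) p (gtgt K m a1) (gtgt K m a2) c"
          using lab_tgt_eq[OF a1[folded m_def] a2[folded m_def] m1(1) lc] t m1 by auto
        then show ?thesis using False c sub m1 lc m_def by auto
      qed
    qed
    then show ?thesis unfolding m_def by (simp add: Tg_def Bl_def trunc_Bt_lt p)
  qed
  then show "gtgt K (Suc m') (comp (Suc m') p a1 a2) = comp m' p (gtgt K (Suc m') a1) (gtgt K (Suc m') a2)"
    using mK_src(2)[OF x m1(1) mn] sg m1 unfolding comp_def m_def[symmetric] by simp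
qed

end


context L begin

lemma comp_bnd_eq:
  assumes a1: "a1 \<in> gcells K (Suc m')" and a2: "a2 \<in> gcells K (Suc m')"
    and cp: "gtgt K (Suc m') a1 = gsrc K (Suc m') a2"
  shows "gsrc K (Suc m') (comp (Suc m') m' a1 a2) = gsrc K (Suc m') a1"
    "gtgt K (Suc m') (comp (Suc m') m' a1 a2) = gtgt K (Suc m') a2"
proof -
  define m where "m = Suc m'"
  have mn: "m \<le> n" using K_le[OF a1] m_def by simp
  have pm: "m' < m" using m_def by simp
  have mm: "m - m' = 1" using m_def by simp
  have cp': "itgt K m (m - m') a1 = isrc K m (m - m') a2" using cp unfolding mm m_def by simp
  have x: "(sig m (beta n m m'), Bl m m' a1 a2) \<in> gcells (tensor n K k K) m"
    using tensor_cell[OF a1[folded m_def] a2[folded m_def] pm cp'] .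
  have m1: "1 \<le> m" "m - 1 = m'" using m_def by auto
  have sg: "gsrc K m (sig m (beta n m m')) = eK m' ()"
     "gtgt K m (sig m (beta n m m')) = eK m' ()"
    using sig_src[of m' m] pm m1 mn sig_eta[of m']
    by (simp_all add: beta_eq beta_mm m_def trunc_Bt_eq)
  have sub: "allpos (globe m') \<subseteq> allpos (Bt m m')"
    using allpos_trunc[of m' "Bt m m'"] by (simp add: m_def trunc_Bt_eq)
  have sa1: "gsrc K m a1 \<in> gcells K m'" "gtgt K m a2 \<in> gcells K m'"
    using K_src[OF a1[folded m_def] m1(1)] K_src[OF a2[folded m_def] m1(1)] m1 by auto
  have "gsrc (Tg n K) m (Bl m m' a1 a2) = etaT K m' (gsrc K m a1)"
  proof -
    have "restrict (restrict (lab m m' a1 a2) (allpos (Bt m m'))) (allpos (globe m'))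
        = restrict (\<lambda>c. if last c = 0 then isrc K m' (m' - (length c - 1)) (gsrc K m a1)
                  else itgt K m' (m' - (length c - 1)) (gsrc K m a1)) (allpos (globe m'))"
    proof (rule restrict_ext)
      fix c assume c: "c \<in> allpos (globe m')"
      then obtain e where ce: "c \<in> pos (globe m') e" by (auto simp: allpos_def)
      have lc: "length c = Suc e" using pos_len[OF ce] .
      have t: "e \<le> m'" "e = m' \<longrightarrow> last c = 0" "last c \<noteq> 2"
        using ce unfolding pos_globe by (auto split: if_splits)
      have "lab m m' a1 a2 c = lab (m-1) m' (gsrc K m a1) (gsrc K m a2) c"
        using lab_src_eq[OF a1[folded m_def] a2[folded m_def] m1(1) lc] t m1 by auto
      also have "\<dots> = (if last c = 0 then isrc K m' (m' - (length c - 1)) (gsrc K m a1)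
                  else itgt K m' (m' - (length c - 1)) (gsrc K m a1))"
        using t lc m1 by (auto simp: lab_def pick_def)
      finally show "restrict (lab m m' a1 a2) (allpos (Bt m m')) c = (if last c = 0 then isrc K m' (m' - (length c - 1)) (gsrc K m a1)
                  else itgt K m' (m' - (length c - 1)) (gsrc K m a1))"
        using c sub by auto
    qed
    then show ?thesis unfolding m_def by (simp add: Tg_def Bl_def trunc_Bt_eq etaT_def)
  qed
  then show "gsrc K (Suc m') (comp (Suc m') m' a1 a2) = gsrc K (Suc m') a1"
    using mK_src(1)[OF x m1(1) mn] sg m1 lunit[OF _ sa1(1)] mn unfolding comp_def m_def[symmetric] by simp
  have "gtgt (Tg n K) m (Bl m m' a1 a2) = etaT K m' (gtgt K m a2)"
  proof -
    have "restrict (\<lambda>c. if length c = m then restrict (lab m m' a1 a2) (allpos (Bt m m'))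
                 (butlast c @ [length (kids (subt (Bt m m') (butlast c)))])
               else restrict (lab m m' a1 a2) (allpos (Bt m m')) c) (allpos (globe m'))
        = restrict (\<lambda>c. if last c = 0 then isrc K m' (m' - (length c - 1)) (gtgt K m a2)
                  else itgt K m' (m' - (length c - 1)) (gtgt K m a2)) (allpos (globe m'))"
    proof (rule restrict_ext)
      fix c assume c: "c \<in> allpos (globe m')"
      then obtain e where ce: "c \<in> pos (globe m') e" by (auto simp: allpos_def)
      have lc: "length c = Suc e" using pos_len[OF ce] .
      show "(if length c = m then restrict (lab m m' a1 a2) (allpos (Bt m m'))
                 (butlast c @ [length (kids (subt (Bt m m') (butlast c)))])
               else restrict (lab m m' a1 a2) (allpos (Bt m m')) c) =
            (if last c = 0 then isrc K m' (m' - (length c - 1)) (gtgt K m a2)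
                  else itgt K m' (m' - (length c - 1)) (gtgt K m a2))"
      proof (cases "e = m'")
        case True
        then have cf: "c = replicate m' 0 @ [0]" using ce unfolding pos_globe by auto
        have bl: "butlast c = replicate m' 0" using cf by simp
        have st: "subt (Bt m m') (replicate m' 0) = PT [globe 0, globe 0]"
          using subt_wrap[of m' _ "[]"] by (simp add: Bt_def m_def)
        have c': "butlast c @ [length (kids (subt (Bt m m') (butlast c)))] = replicate m' 0 @ [2]"
          unfolding bl st by simp
        have inA: "replicate m' 0 @ [2] \<in> allpos (Bt m m')"
          unfolding allpos_def using m_def
          by (auto simp: Bt_def pos_wrap pos_PT2 intro!: exI[of _ m'])
        have "lab m m' a1 a2 (replicate m' 0 @ [2]) = gtgt K m a2"
          using mm by (simp add: lab_def pick_def)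
        then show ?thesis using True lc c' inA m_def cf by simp
      next
        case False
        have t: "e < m'" using False ce unfolding pos_globe by (auto split: if_splits)
        have l2: "last c \<noteq> 2" using ce unfolding pos_globe by (auto split: if_splits)
        have "lab m m' a1 a2 c = lab (m-1) m' (gtgt K m a1) (gtgt K m a2) c"
          using lab_tgt_eq[OF a1[folded m_def] a2[folded m_def] m1(1) lc] t m1 by auto
        also have "\<dots> = (if last c = 0 then isrc K m' (m' - e) (gtgt K m a1)
                  else itgt K m' (m' - e) (gtgt K m a1))"
          using t lc m1 l2 by (auto simp: lab_def pick_def)
        also have "\<dots> = (if last c = 0 then isrc K m' (m' - e) (gtgt K m a2)
                  else itgt K m' (m' - e) (gtgt K m a2))"
        proof -
          have m2: "2 \<le> m" using t m_def by simp
          have j: "1 \<le> m' - e" using t by simp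
          have "isrc K (m-1) (m'-e) (gtgt K m a2) = isrc K (m-1) (m'-e) (gsrc K m a2)"
               "itgt K (m-1) (m'-e) (gsrc K m a2) = itgt K (m-1) (m'-e) (gtgt K m a2)"
            using glob2[OF a2[folded m_def] m2 j] by auto
          then show ?thesis using cp m1 m_def by simp
        qed
        finally show ?thesis using False c sub m1 lc m_def by auto
      qed
    qed
    then show ?thesis unfolding m_def by (simp add: Tg_def Bl_def trunc_Bt_eq etaT_def)
  qed
  then show "gtgt K (Suc m') (comp (Suc m') m' a1 a2) = gtgt K (Suc m') a2"
    using mK_src(2)[OF x m1(1) mn] sg m1 lunit[OF _ sa1(2)] mn unfolding comp_def m_def[symmetric] by simp
qed

end


context L begin

definition cmpC :: "nat \<Rightarrow> nat \<Rightarrow> 'a \<Rightarrow> 'a \<Rightarrow> bool" where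
  "cmpC m p a1 a2 \<longleftrightarrow> a1 \<in> gcells K m \<and> a2 \<in> gcells K m \<and> p < m \<and> itgt K m (m-p) a1 = isrc K m (m-p) a2"

lemma cmpC_down:
  assumes c: "cmpC (Suc m') p a1 a2" and p: "p < m'"
  shows "cmpC m' p (gsrc K (Suc m') a1) (gsrc K (Suc m') a2) \<and> cmpC m' p (gtgt K (Suc m') a1) (gtgt K (Suc m') a2)"
proof -
  have a1: "a1 \<in> gcells K (Suc m')" and a2: "a2 \<in> gcells K (Suc m')"
    and cp: "itgt K (Suc m') (Suc (m' - p)) a1 = isrc K (Suc m') (Suc (m' - p)) a2"
    using c p unfolding cmpC_def by (auto simp: Suc_diff_le)
  have m2: "2 \<le> Suc m'" and j: "1 \<le> m' - p" using p by auto
  note g1 = glob2[OF a1 m2 j] and g2 = glob2[OF a2 m2 j]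
  have mem: "gsrc K (Suc m') a1 \<in> gcells K m'" "gtgt K (Suc m') a1 \<in> gcells K m'"
       "gsrc K (Suc m') a2 \<in> gcells K m'" "gtgt K (Suc m') a2 \<in> gcells K m'"
    using K_src[OF a1] K_src[OF a2] by auto
  show ?thesis using cp g1 g2 mem p unfolding cmpC_def itgt_Suc' isrc_Suc' by simp
qed

lemma comp_bnd:
  "cmpC m p a1 a2 \<Longrightarrow> isrc K m (m-p) (comp m p a1 a2) = isrc K m (m-p) a1 \<and>
                       itgt K m (m-p) (comp m p a1 a2) = itgt K m (m-p) a2"
proof (induction m arbitrary: a1 a2)
  case 0 then show ?case by (simp add: cmpC_def)
next
  case (Suc m')
  have a1: "a1 \<in> gcells K (Suc m')" and a2: "a2 \<in> gcells K (Suc m')" and p: "p < Suc m'"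
    and cp: "itgt K (Suc m') (Suc m' - p) a1 = isrc K (Suc m') (Suc m' - p) a2"
    using Suc.prems unfolding cmpC_def by auto
  show ?case
  proof (cases "p = m'")
    case True
    have cp': "gtgt K (Suc m') a1 = gsrc K (Suc m') a2" using cp True by simp
    show ?thesis using comp_bnd_eq[OF a1 a2 cp'] True by simp
  next
    case False
    then have pl: "p < m'" using p by simp
    have e: "Suc m' - p = Suc (m' - p)" using pl by simp
    note d = cmpC_down[OF Suc.prems pl]
    show ?thesis unfolding e isrc_Suc' itgt_Suc'
      using comp_bnd_lt[OF a1 a2 pl cp] Suc.IH[OF conjunct1[OF d]] Suc.IH[OF conjunct2[OF d]] by simp
  qed
qed

lemma comp_props:
  assumes "cmpC m p a1 a2"
  shows "comp m p a1 a2 \<in> gcells K m" "kt m (comp m p a1 a2) = tcomp p (kt m a1) (kt m a2)"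
    "isrc K m (m-p) (comp m p a1 a2) = isrc K m (m-p) a1"
    "itgt K m (m-p) (comp m p a1 a2) = itgt K m (m-p) a2"
  using assms comp_cell comp_k comp_bnd unfolding cmpC_def by blast+

fun iota :: "nat \<Rightarrow> nat \<Rightarrow> ptree \<Rightarrow> 'a \<Rightarrow> 'a" where
  "iota i 0 t a = a"
| "iota i (Suc j) t a = gam (i + Suc j) (t, \<lambda>_. ()) (iota i j t a, iota i j t a)"

lemma gam_props:
  assumes m: "1 \<le> m" "m \<le> n" and ht: "hle (m-1) t"
    and u: "u \<in> gcells K (m-1)" "kt (m-1) u = t" and v: "v \<in> gcells K (m-1)" "kt (m-1) v = t"
    and par: "parallel K (m-1) u v"
  shows "gam m (t, \<lambda>_. ()) (u, v) \<in> gcells K m \<and> kt m (gam m (t, \<lambda>_. ()) (u, v)) = t \<and>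
         gsrc K m (gam m (t, \<lambda>_. ()) (u, v)) = u \<and> gtgt K m (gam m (t, \<lambda>_. ()) (u, v)) = v"
proof -
  have al: "(t, \<lambda>_. ()) \<in> gcells (T1 n) (m-1)" using T1_cells[of "m-1" n] m ht by auto
  have tt: "trunc (m-1) t = t" using trunc_hle[OF ht] .
  have ku: "k (m-1) u = (t, \<lambda>_. ())" "k (m-1) v = (t, \<lambda>_. ())" using k_eq u v by auto
  have "(u, v) \<in> Cset n K k m (tid (t, \<lambda>_. ()))"
    using u v ku par tt m unfolding Cset_def tid_def fib_def parallel_def by (auto simp: T1_src T1_tgt)
  then have "gam m (t, \<lambda>_. ()) (u, v) \<in> fib K k m (tid (t, \<lambda>_. ())) \<and>
        gsrc K m (gam m (t, \<lambda>_. ()) (u, v)) = u \<and> gtgt K m (gam m (t, \<lambda>_. ()) (u, v)) = v"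
    using con al m unfolding contraction_def by (metis fst_conv snd_conv)
  then show ?thesis by (auto simp: fib_def tid_def kt_def)
qed

lemma iota_props:
  assumes a: "a \<in> gcells K i" and t: "kt i a = t" and ij: "i + j \<le> n"
  shows "iota i j t a \<in> gcells K (i + j) \<and> kt (i + j) (iota i j t a) = t \<and>
         isrc K (i + j) j (iota i j t a) = a \<and> itgt K (i + j) j (iota i j t a) = a"
  using ij
proof (induction j)
  case 0 then show ?case using a t by simp
next
  case (Suc j)
  then have IH: "iota i j t a \<in> gcells K (i + j)" "kt (i + j) (iota i j t a) = t"
     "isrc K (i + j) j (iota i j t a) = a" "itgt K (i + j) j (iota i j t a) = a" by auto
  have ht: "hle (i + j) t" using k_eq[OF a] t hle_mono by fastforce
  have "gam (i + Suc j) (t, \<lambda>_. ()) (iota i j t a, iota i j t a) \<in> gcells K (i + Suc j) \<and>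
        kt (i + Suc j) (gam (i + Suc j) (t, \<lambda>_. ()) (iota i j t a, iota i j t a)) = t \<and>
        gsrc K (i + Suc j) (gam (i + Suc j) (t, \<lambda>_. ()) (iota i j t a, iota i j t a)) = iota i j t a \<and>
        gtgt K (i + Suc j) (gam (i + Suc j) (t, \<lambda>_. ()) (iota i j t a, iota i j t a)) = iota i j t a"
    using gam_props[of "i + Suc j" t "iota i j t a" "iota i j t a"] Suc.prems ht IH
    by (simp add: parallel_def)
  then show ?case using IH by (simp del: isrc.simps(2) itgt.simps(2) add: isrc_Suc' itgt_Suc')
qed

lemma WF:
  assumes c0: "c0 \<in> gcells K m" and j: "j < m"
    and g: "g \<in> gcells K j" "kt j g = trunc j (kt m c0)"
    and h: "h \<in> gcells K j" "kt j h = trunc j (kt m c0)"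
    and pg: "parallel K j g (isrc K m (m-j) c0)" and ph: "parallel K j (itgt K m (m-j) c0) h"
  shows "\<exists>c\<in>gcells K m. kt m c = kt m c0 \<and> isrc K m (m-j) c = g \<and> itgt K m (m-j) c = h"
proof -
  define x where "x = kt m c0"
  define z where "z = trunc j x"
  have mn: "m \<le> n" using K_le[OF c0] .
  have hz: "hle j z" unfolding z_def using hle_trunc .
  have mj: "m - (m - j) = j" using j by simp
  have u0: "isrc K m (m-j) c0 \<in> gcells K j" "kt j (isrc K m (m-j) c0) = z"
     "itgt K m (m-j) c0 \<in> gcells K j" "kt j (itgt K m (m-j) c0) = z"
    using isrc_mem[OF c0, of "m-j"] kt_isrc[OF c0, of "m-j"] mj by (auto simp: z_def x_def)
  define h1 where "h1 = gam (Suc j) (z, \<lambda>_. ()) (g, isrc K m (m-j) c0)"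
  define h2 where "h2 = gam (Suc j) (z, \<lambda>_. ()) (itgt K m (m-j) c0, h)"
  have H1p: "h1 \<in> gcells K (Suc j) \<and> kt (Suc j) h1 = z \<and> gsrc K (Suc j) h1 = g \<and> gtgt K (Suc j) h1 = isrc K m (m-j) c0"
    unfolding h1_def using gam_props[of "Suc j" z g "isrc K m (m-j) c0"] j mn hz g u0 pg
    by (simp add: x_def z_def)
  have H2p: "h2 \<in> gcells K (Suc j) \<and> kt (Suc j) h2 = z \<and> gsrc K (Suc j) h2 = itgt K m (m-j) c0 \<and> gtgt K (Suc j) h2 = h"
    unfolding h2_def using gam_props[of "Suc j" z "itgt K m (m-j) c0" h] j mn hz h u0 ph
    by (simp add: x_def z_def)
  have e: "Suc j + (m - Suc j) = m" using j by simp
  define i1 where "i1 = iota (Suc j) (m - Suc j) z h1"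
  define i2 where "i2 = iota (Suc j) (m - Suc j) z h2"
  have I1: "i1 \<in> gcells K m \<and> kt m i1 = z \<and> isrc K m (m - Suc j) i1 = h1 \<and> itgt K m (m - Suc j) i1 = h1"
    using iota_props[of h1 "Suc j" z "m - Suc j"] H1p e mn unfolding i1_def by simp
  have I2: "i2 \<in> gcells K m \<and> kt m i2 = z \<and> isrc K m (m - Suc j) i2 = h2 \<and> itgt K m (m - Suc j) i2 = h2"
    using iota_props[of h2 "Suc j" z "m - Suc j"] H2p e mn unfolding i2_def by simp
  have e2: "m - j = Suc (m - Suc j)" "m - (m - Suc j) = Suc j" using j by auto
  have B1: "isrc K m (m-j) i1 = g" "itgt K m (m-j) i1 = isrc K m (m-j) c0"
    using I1 H1p unfolding e2(1) isrc.simps itgt.simps e2(2) by auto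
  have B2: "isrc K m (m-j) i2 = itgt K m (m-j) c0" "itgt K m (m-j) i2 = h"
    using I2 H2p unfolding e2(1) isrc.simps itgt.simps e2(2) by auto
  define d where "d = comp m j c0 i2"
  have cd: "cmpC m j c0 i2" using c0 I2 j B2 unfolding cmpC_def by simp
  note D = comp_props[OF cd, folded d_def]
  have kd: "kt m d = x" using D(2) I2 tcomp_id_right by (simp add: x_def z_def)
  define c where "c = comp m j i1 d"
  have cc: "cmpC m j i1 d" using D I1 j B1 unfolding cmpC_def by simp
  note C = comp_props[OF cc, folded c_def]
  have "kt m c = x" using C(2) I1 kd tcomp_id_left by (simp add: z_def)
  then show ?thesis using C D B1 B2 by (auto simp: x_def intro!: bexI[of _ c])
qed

end


context L begin

lemma FA:
  assumes "c0 \<in> gcells K m" "j < m" "g \<in> gcells K j" "kt j g = trunc j (kt m c0)"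
    "h \<in> gcells K j" "kt j h = trunc j (kt m c0)" "parallel K j g h"
  shows "\<exists>c\<in>gcells K m. kt m c = kt m c0 \<and> isrc K m (m-j) c = g \<and> itgt K m (m-j) c = h"
  using assms
proof (induction j arbitrary: g h)
  case 0
  then show ?case using WF[of c0 m 0 g h] by (simp add: parallel_def)
next
  case (Suc j)
  note c0 = Suc.prems(1) and jm = Suc.prems(2) and g = Suc.prems(3,4) and h = Suc.prems(5,6)
    and gh = Suc.prems(7)
  define g' where "g' = gsrc K (Suc j) g"
  define h' where "h' = gtgt K (Suc j) g"
  have mem: "g' \<in> gcells K j" "h' \<in> gcells K j" using K_src[OF g(1)] by (auto simp: g'_def h'_def)
  have kg: "kt j g' = trunc j (kt m c0)" "kt j h' = trunc j (kt m c0)"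
    using kt_src[OF g(1)] g(2) by (auto simp: g'_def h'_def trunc_trunc min_def)
  have par: "parallel K j g' h'"
  proof (cases j)
    case 0 then show ?thesis by (simp add: parallel_def)
  next
    case (Suc j') then show ?thesis using K_glob[OF g(1)] by (simp add: parallel_def g'_def h'_def)
  qed
  obtain c1 where c1: "c1 \<in> gcells K m" "kt m c1 = kt m c0" "isrc K m (m-j) c1 = g'" "itgt K m (m-j) c1 = h'"
    using Suc.IH[OF c0 _ mem(1) kg(1) mem(2) kg(2) par] jm by auto
  have jm': "j < m" using jm by simp
  note HH = H1[OF c1(1) jm']
  have pg: "parallel K (Suc j) g (isrc K m (m - Suc j) c1)"
    unfolding parallel_def using HH c1 by (simp add: g'_def h'_def)
  have ph: "parallel K (Suc j) (itgt K m (m - Suc j) c1) h"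
    using gh unfolding parallel_def using HH c1 by (simp add: g'_def h'_def)
  show ?case using WF[OF c1(1) jm g(1) _ h(1) _ pg ph] g h c1 by auto
qed

lemma eKmap: "gmap n (one n) K eK" using op by (simp add: operad_def)
lemma eK_k: "m \<le> n \<Longrightarrow> k m (eK m ()) = etaT (one n) m ()" using op by (simp add: operad_def)

lemma eK_cell: "m \<le> n \<Longrightarrow> eK m () \<in> gcells K m \<and> kt m (eK m ()) = globe m"
proof -
  assume m: "m \<le> n"
  have "k m (eK m ()) = (globe m, \<lambda>_. ())" using eK_k[OF m] by (simp add: etaT_one)
  moreover have "eK m () \<in> gcells K m" using eKmap m unfolding gmap_def by (auto simp: one_def)
  ultimately show ?thesis by (simp add: kt_def)
qed

lemma S: "m \<le> n \<Longrightarrow> hle m x \<Longrightarrow> \<exists>c\<in>gcells K m. kt m c = x"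
proof (induction x rule: measure_induct_rule[where f=size])
  case (less x)
  obtain d ts where x: "x = wrap d (PT ts)" and l: "length ts \<noteq> 1" using wrap_decomp by blast
  have dm: "d \<le> m" and hts: "hle (m - d) (PT ts)" using less.prems(2) unfolding x hle_wrap by auto
  show ?case
  proof (cases ts)
    case Nil
    have xg: "x = globe d" using x Nil globe_wrap by simp
    have e: "d + (m - d) = m" using dm by simp
    show ?thesis using iota_props[of "eK d ()" d "globe d" "m - d"] eK_cell[of d] dm less.prems(1) e xg
      by auto
  next
    case (Cons t rest)
    with l obtain u us where ts: "ts = t # u # us" by (cases rest) auto
    from hts ts obtain m1 where m1: "m - d = Suc m1" by (cases "m - d") auto
    have dlt: "d < m" using m1 by simp
    define x1 where "x1 = wrap d (PT [t])"
    define x2 where "x2 = wrap d (PT (u # us))"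
    have h1: "hle m x1" "hle m x2" using hts dm m1 ts by (auto simp: x1_def x2_def hle_wrap)
    have s1: "size x1 < size x" "size x2 < size x"
      using size_wrap_less size_wrap_less2 by (auto simp: x x1_def x2_def ts)
    obtain a1 where a1: "a1 \<in> gcells K m" "kt m a1 = x1" using less.IH[OF s1(1) less.prems(1) h1(1)] by blast
    obtain a2 where a2: "a2 \<in> gcells K m" "kt m a2 = x2" using less.IH[OF s1(2) less.prems(1) h1(2)] by blast
    have tr: "trunc d x1 = globe d" "trunc d x2 = globe d"
      by (simp_all add: x1_def x2_def trunc_wrap globe_wrap)
    have md: "m - (m - d) = d" using dm by simp
    have g: "itgt K m (m-d) a1 \<in> gcells K d" "kt d (itgt K m (m-d) a1) = trunc d (kt m a2)"
      using isrc_mem[OF a1(1), of "m-d"] kt_isrc[OF a1(1), of "m-d"] md a1(2) a2(2) tr by auto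
    obtain a2' where a2': "a2' \<in> gcells K m" "kt m a2' = x2" "isrc K m (m-d) a2' = itgt K m (m-d) a1"
      using FA[OF a2(1) dlt g(1) g(2) g(1) g(2)] a2(2) by (auto simp: parallel_def)
    have cc: "cmpC m d a1 a2'" using a1 a2' dlt unfolding cmpC_def by simp
    have "kt m (comp m d a1 a2') = x"
      using comp_props(2)[OF cc] a1 a2' by (simp add: x1_def x2_def tcomp_wrap x ts)
    then show ?thesis using comp_props(1)[OF cc] by blast
  qed
qed

primrec sec :: "nat \<Rightarrow> t1cell \<Rightarrow> 'a" where
  "sec 0 x = (SOME a. a \<in> gcells K 0 \<and> k 0 a = x)"
| "sec (Suc m) x = (SOME a. a \<in> gcells K (Suc m) \<and> k (Suc m) a = x \<and>
      gsrc K (Suc m) a = sec m (gsrc (T1 n) (Suc m) x) \<and> gtgt K (Suc m) a = sec m (gtgt (T1 n) (Suc m) x))"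

lemma sec_ok: "m \<le> n \<Longrightarrow> x \<in> gcells (T1 n) m \<Longrightarrow> sec m x \<in> gcells K m \<and> k m (sec m x) = x \<and>
   (\<forall>m'. m = Suc m' \<longrightarrow> gsrc K m (sec m x) = sec m' (gsrc (T1 n) m x) \<and> gtgt K m (sec m x) = sec m' (gtgt (T1 n) m x))"
proof (induction m arbitrary: x)
  case 0
  then obtain t where x: "x = (t, \<lambda>_. ())" "hle 0 t" using T1_cells by auto
  obtain c where "c \<in> gcells K 0" "kt 0 c = t" using S[of 0 t] x by auto
  then have "\<exists>a. a \<in> gcells K 0 \<and> k 0 a = x" using k_eq x by metis
  from someI_ex[OF this] show ?case by simp
next
  case (Suc m)
  then obtain t where x: "x = (t, \<lambda>_. ())" "hle (Suc m) t" using T1_cells by auto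
  define y where "y = (trunc m t, (\<lambda>_. ()) :: nat list \<Rightarrow> unit)"
  have ys: "gsrc (T1 n) (Suc m) x = y" "gtgt (T1 n) (Suc m) x = y" by (simp_all add: y_def T1_src T1_tgt x)
  have yc: "y \<in> gcells (T1 n) m" using T1_cells[of m n] Suc.prems hle_trunc by (auto simp: y_def)
  have u: "sec m y \<in> gcells K m" "k m (sec m y) = y" using Suc.IH[OF _ yc] Suc.prems by auto
  have ku: "kt m (sec m y) = trunc m t" using u(2) by (simp add: kt_def y_def)
  obtain c0 where c0: "c0 \<in> gcells K (Suc m)" "kt (Suc m) c0 = t" using S[of "Suc m" t] x Suc.prems by auto
  obtain c where c: "c \<in> gcells K (Suc m)" "kt (Suc m) c = t" "isrc K (Suc m) 1 c = sec m y" "itgt K (Suc m) 1 c = sec m y"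
    using FA[of c0 "Suc m" m "sec m y" "sec m y"] c0 u ku by (auto simp: parallel_def)
  have "c \<in> gcells K (Suc m) \<and> k (Suc m) c = x \<and> gsrc K (Suc m) c = sec m (gsrc (T1 n) (Suc m) x) \<and>
        gtgt K (Suc m) c = sec m (gtgt (T1 n) (Suc m) x)"
    using c k_eq[OF c(1)] x ys by simp
  then have "\<exists>a. a \<in> gcells K (Suc m) \<and> k (Suc m) a = x \<and> gsrc K (Suc m) a = sec m (gsrc (T1 n) (Suc m) x) \<and>
        gtgt K (Suc m) a = sec m (gtgt (T1 n) (Suc m) x)" by blast
  from someI_ex[OF this] show ?case by simp
qed

lemma main: "(\<exists>kh. gmap n (T1 n) K kh \<and> (\<forall>m\<le>n. \<forall>x\<in>gcells (T1 n) m. k m (kh m x) = x))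
         \<and> (\<forall>m\<le>n. k m ` gcells K m = gcells (T1 n) m)"
proof -
  have gm: "gmap n (T1 n) K sec"
    unfolding gmap_def
  proof (intro conjI allI ballI impI)
    fix m x assume "m \<le> n" "x \<in> gcells (T1 n) m"
    then show "sec m x \<in> gcells K m" using sec_ok by blast
  next
    fix m x assume m: "1 \<le> m \<and> m \<le> n" and x: "x \<in> gcells (T1 n) m"
    then obtain m' where mm: "m = Suc m'" by (cases m) auto
    show "sec (m - 1) (gsrc (T1 n) m x) = gsrc K m (sec m x)"
      using sec_ok[of m x] m x mm by simp
    show "sec (m - 1) (gtgt (T1 n) m x) = gtgt K m (sec m x)"
      using sec_ok[of m x] m x mm by simp
  qed
  have sect: "\<forall>m\<le>n. \<forall>x\<in>gcells (T1 n) m. k m (sec m x) = x" using sec_ok by blast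
  have surj: "k m ` gcells K m = gcells (T1 n) m" if m: "m \<le> n" for m
  proof
    show "k m ` gcells K m \<subseteq> gcells (T1 n) m" using kmap m unfolding gmap_def by blast
    show "gcells (T1 n) m \<subseteq> k m ` gcells K m"
    proof
      fix x assume "x \<in> gcells (T1 n) m"
      then show "x \<in> k m ` gcells K m" using sec_ok[OF m] by (metis image_eqI)
    qed
  qed
  show ?thesis using gm sect surj by blast
qed

end

theorem mainTheorem6:
  fixes n :: nat
    and K :: "'a gset"
    and k :: "nat \<Rightarrow> 'a \<Rightarrow> t1cell"
    and eK :: "nat \<Rightarrow> unit \<Rightarrow> 'a"
    and mK :: "nat \<Rightarrow> 'a \<times> 'a tcell \<Rightarrow> 'a"
    and gam :: "nat \<Rightarrow> t1cell \<Rightarrow> 'a \<times> 'a \<Rightarrow> 'a"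
    and sig :: "nat \<Rightarrow> t1cell \<Rightarrow> 'a"
  assumes "operad n K k eK mK"
    and "contraction n K k gam"
    and "comp_system n K k eK sig"
  shows "(\<exists>kh. gmap n (T1 n) K kh \<and> (\<forall>m\<le>n. \<forall>x\<in>gcells (T1 n) m. k m (kh m x) = x))
         \<and> (\<forall>m\<le>n. k m ` gcells K m = gcells (T1 n) m)"
proof -
  interpret L n K k eK mK gam sig using assms by (rule L.intro)
  show ?thesis by (rule main)
qed

end
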